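(* Let $(R,\mathfrak m)$ be a noetherian local ring, $\nu$ a valuation centered on $R$, and $R\to R^{(1)}$ a local blowing up with respect to $\nu$. If $\mathrm{Nil}(R)$ is the only associated prime ideal of $R$, then $\mathrm{Nil}(R^{(1)})$ is the only associated prime ideal of $R^{(1)}$.
   Context: All rings are commutative noetherian with $1$; $\mathrm{Nil}(A)$ denotes the nilradical of $A$. A valuation on a ring $R$ is a map $\nu:R\to\Gamma\cup\{\infty\}$ ($\Gamma$ an ordered abelian group) with $\nu(ab)=\nu(a)+\nu(b)$, $\nu(a+b)\ge\min\{\nu(a),\nu(b)\}$, $\nu(1)=0$, $\nu(0)=\infty$, whose support $\mathrm{supp}(\nu)=\{a:\nu(a)=\infty\}$ is a minimal prime ideal; it extends to localizations at multiplicative sets disjoint from the support via $\nu(a/s)=\nu(a)-\nu(s)$ and restricts to subrings, implicitly. $\nu$ has a center on $R$ if $\nu\ge0$ on $R$; its center is $\mathfrak C_\nu(R)=\{a:\nu(a)>0\}$. $\nu$ is centered on $(R,\mathfrak m)$ if $\nu\ge0$ on $R$ and $\nu>0$ on $\mathfrak m$. Local blowing up: for $b\in R\setminus\mathrm{supp}(\nu)$ let $J(b)=\bigcup_{i\ge1}\mathrm{ann}_R(b^i)$, so $R/J(b)\subseteq R_b$. Given $a_1,\ldots,a_r\in R$ with $\nu(a_i)\ge\nu(b)$, let $R'=(R/J(b))[a_1/b,\ldots,a_r/b]\subseteq R_b$ and $R^{(1)}=R'_{\mathfrak C_\nu(R')}$; the canonical map $R\to R^{(1)}$ is the local blowing up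 of $R$ with respect to $\nu$ along $(b,a_1,\ldots,a_r)$. *)

theory Defs
  imports "HOL-Algebra.Algebra"
begin

section \<open>Values in an ordered abelian group extended by infinity (None = infinity)\<close>

fun vplus :: "'g::linordered_ab_group_add option \<Rightarrow> 'g option \<Rightarrow> 'g option" where
  "vplus (Some x) (Some y) = Some (x + y)"
| "vplus _ _ = None"

definition vle :: "'g::linordered_ab_group_add option \<Rightarrow> 'g option \<Rightarrow> bool" where
  "vle x y \<longleftrightarrow> y = None \<or> (\<exists>a c. x = Some a \<and> y = Some c \<and> a \<le> c)"

definition vpos :: "'g::linordered_ab_group_add option \<Rightarrow> bool" where
  "vpos x \<longleftrightarrow> x = None \<or> (\<exists>a. x = Some a \<and> 0 < a)"

definition nilrad :: "('a, 'b) ring_scheme \<Rightarrow> 'a set" where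
  "nilrad R = {a \<in> carrier R. \<exists>n::nat. a [^]\<^bsub>R\<^esub> n = \<zero>\<^bsub>R\<^esub>}"

definition ass_primes :: "('a, 'b) ring_scheme \<Rightarrow> 'a set set" where
  "ass_primes R = {P. primeideal P R \<and>
     (\<exists>x \<in> carrier R. P = {a \<in> carrier R. a \<otimes>\<^bsub>R\<^esub> x = \<zero>\<^bsub>R\<^esub>})}"

definition minimal_prime :: "'a set \<Rightarrow> ('a, 'b) ring_scheme \<Rightarrow> bool" where
  "minimal_prime P R \<longleftrightarrow> primeideal P R \<and> (\<forall>Q. primeideal Q R \<and> Q \<subseteq> P \<longrightarrow> Q = P)"

definition noeth_local_ring :: "('a, 'b) ring_scheme \<Rightarrow> 'a set \<Rightarrow> bool" where
  "noeth_local_ring R m \<longleftrightarrow> cring R \<and> noetherian_ring R \<and> maximalideal m R \<and>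
     (\<forall>I. maximalideal I R \<longrightarrow> I = m)"

definition supp :: "('a, 'b) ring_scheme \<Rightarrow> ('a \<Rightarrow> 'g::linordered_ab_group_add option) \<Rightarrow> 'a set" where
  "supp R \<nu> = {a \<in> carrier R. \<nu> a = None}"

definition valuation :: "('a, 'b) ring_scheme \<Rightarrow> ('a \<Rightarrow> 'g::linordered_ab_group_add option) \<Rightarrow> bool" where
  "valuation R \<nu> \<longleftrightarrow>
     (\<forall>a \<in> carrier R. \<forall>b \<in> carrier R. \<nu> (a \<otimes>\<^bsub>R\<^esub> b) = vplus (\<nu> a) (\<nu> b)) \<and>
     (\<forall>a \<in> carrier R. \<forall>b \<in> carrier R.
        vle (\<nu> a) (\<nu> (a \<oplus>\<^bsub>R\<^esub> b)) \<or> vle (\<nu> b) (\<nu> (a \<oplus>\<^bsub>R\<^esub> b))) \<and>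
     \<nu> \<one>\<^bsub>R\<^esub> = Some 0 \<and> \<nu> \<zero>\<^bsub>R\<^esub> = None \<and>
     minimal_prime (supp R \<nu>) R"

definition centered_on :: "('a, 'b) ring_scheme \<Rightarrow> 'a set \<Rightarrow> ('a \<Rightarrow> 'g::linordered_ab_group_add option) \<Rightarrow> bool" where
  "centered_on R m \<nu> \<longleftrightarrow> (\<forall>a \<in> carrier R. vle (Some 0) (\<nu> a)) \<and> (\<forall>a \<in> m. vpos (\<nu> a))"

definition center :: "('a, 'b) ring_scheme \<Rightarrow> ('a \<Rightarrow> 'g::linordered_ab_group_add option) \<Rightarrow> 'a set" where
  "center R \<nu> = {a \<in> carrier R. vpos (\<nu> a)}"

definition loc_rel :: "('a, 'b) ring_scheme \<Rightarrow> 'a set \<Rightarrow> (('a \<times> 'a) \<times> ('a \<times> 'a)) set" where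
  "loc_rel R S = {((a, s), (a', s')). a \<in> carrier R \<and> a' \<in> carrier R \<and> s \<in> S \<and> s' \<in> S \<and>
     (\<exists>t \<in> S. t \<otimes>\<^bsub>R\<^esub> ((a \<otimes>\<^bsub>R\<^esub> s') \<ominus>\<^bsub>R\<^esub> (a' \<otimes>\<^bsub>R\<^esub> s)) = \<zero>\<^bsub>R\<^esub>)}"

definition frac :: "('a, 'b) ring_scheme \<Rightarrow> 'a set \<Rightarrow> 'a \<Rightarrow> 'a \<Rightarrow> ('a \<times> 'a) set" where
  "frac R S a s = loc_rel R S `` {(a, s)}"

definition loc_mult :: "('a, 'b) ring_scheme \<Rightarrow> 'a set \<Rightarrow> ('a \<times> 'a) set \<Rightarrow> ('a \<times> 'a) set \<Rightarrow> ('a \<times> 'a) set" where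
  "loc_mult R S U V = \<Union>{frac R S (a \<otimes>\<^bsub>R\<^esub> a') (s \<otimes>\<^bsub>R\<^esub> s') | a s a' s'. (a, s) \<in> U \<and> (a', s') \<in> V}"

definition loc_add :: "('a, 'b) ring_scheme \<Rightarrow> 'a set \<Rightarrow> ('a \<times> 'a) set \<Rightarrow> ('a \<times> 'a) set \<Rightarrow> ('a \<times> 'a) set" where
  "loc_add R S U V = \<Union>{frac R S ((a \<otimes>\<^bsub>R\<^esub> s') \<oplus>\<^bsub>R\<^esub> (a' \<otimes>\<^bsub>R\<^esub> s)) (s \<otimes>\<^bsub>R\<^esub> s') | a s a' s'.
      (a, s) \<in> U \<and> (a', s') \<in> V}"

definition localization :: "('a, 'b) ring_scheme \<Rightarrow> 'a set \<Rightarrow> ('a \<times> 'a) set ring" where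
  "localization R S =
     \<lparr>carrier = (carrier R \<times> S) // loc_rel R S,
      monoid.mult = loc_mult R S,
      one = frac R S \<one>\<^bsub>R\<^esub> \<one>\<^bsub>R\<^esub>,
      ring.zero = frac R S \<zero>\<^bsub>R\<^esub> \<one>\<^bsub>R\<^esub>,
      ring.add = loc_add R S\<rparr>"

text \<open>Extension of a valuation to a localization: \<nu>(a/s) = \<nu>(a) - \<nu>(s)
  (well defined when S is disjoint from the support).\<close>
definition val_ext :: "('a \<Rightarrow> 'g::linordered_ab_group_add option) \<Rightarrow> ('a \<times> 'a) set \<Rightarrow> 'g option" where
  "val_ext \<nu> U = (SOME v. \<exists>(a, s) \<in> U. \<nu> a = vplus v (\<nu> s))"

definition powers :: "('a, 'b) ring_scheme \<Rightarrow> 'a \<Rightarrow> 'a set" where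
  "powers R b = {b [^]\<^bsub>R\<^esub> (n::nat) | n. True}"

text \<open>R' = (R/J(b))[a_1/b, ..., a_r/b], as a subset of R_b; the image of R in R_b is R/J(b).\<close>
definition blowup_subring :: "('a, 'b) ring_scheme \<Rightarrow> 'a \<Rightarrow> 'a list \<Rightarrow> ('a \<times> 'a) set set" where
  "blowup_subring R b as =
     generate_ring (localization R (powers R b))
       ((\<lambda>a. frac R (powers R b) a \<one>\<^bsub>R\<^esub>) ` carrier R \<union>
        (\<lambda>a. frac R (powers R b) a b) ` set as)"

definition local_blowup ::
  "('a, 'b) ring_scheme \<Rightarrow> ('a \<Rightarrow> 'g::linordered_ab_group_add option) \<Rightarrow> 'a \<Rightarrow> 'a list
     \<Rightarrow> (('a \<times> 'a) set \<times> ('a \<times> 'a) set) set ring" where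
  "local_blowup R \<nu> b as =
     (let Rb = localization R (powers R b);
          R' = (Rb\<lparr>carrier := blowup_subring R b as\<rparr>)
      in localization R' (carrier R' - center R' (val_ext \<nu>)))"

end

theory Submission
  imports Defs
begin

locale nzloc = cring R for R :: "('a,'b) ring_scheme" (structure) +
  fixes S :: "'a set"
  assumes S_sub: "S \<subseteq> carrier R"
    and one_S: "\<one> \<in> S"
    and S_mult: "s \<in> S \<Longrightarrow> t \<in> S \<Longrightarrow> s \<otimes> t \<in> S"
    and S_nzd: "s \<in> S \<Longrightarrow> a \<in> carrier R \<Longrightarrow> s \<otimes> a = \<zero> \<Longrightarrow> a = \<zero>"
begin

lemma S_car: "s \<in> S \<Longrightarrow> s \<in> carrier R" using S_sub by auto

lemma S_cancel:
  assumes "s \<in> S" "x \<in> carrier R" "y \<in> carrier R" "s \<otimes> x = s \<otimes> y"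
  shows "x = y"
proof -
  have "s \<otimes> (x \<ominus> y) = \<zero>" using assms S_car[OF assms(1)]
    by (simp add: r_distr minus_eq r_minus r_neg)
  then have "x \<ominus> y = \<zero>" using S_nzd assms by auto
  then show ?thesis using assms r_right_minus_eq by auto
qed

lemma rel_iff: "((a,s),(a',s')) \<in> loc_rel R S \<longleftrightarrow>
   a \<in> carrier R \<and> a' \<in> carrier R \<and> s \<in> S \<and> s' \<in> S \<and> a \<otimes> s' = a' \<otimes> s"
proof
  assume h: "((a,s),(a',s')) \<in> loc_rel R S"
  then obtain t where t: "t \<in> S" "t \<otimes> ((a \<otimes> s') \<ominus> (a' \<otimes> s)) = \<zero>"
    and c: "a \<in> carrier R" "a' \<in> carrier R" "s \<in> S" "s' \<in> S" unfolding loc_rel_def by blast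
  have cc: "s \<in> carrier R" "s' \<in> carrier R" using c S_car by auto
  have "(a \<otimes> s') \<ominus> (a' \<otimes> s) \<in> carrier R" using c cc by simp
  then have "(a \<otimes> s') \<ominus> (a' \<otimes> s) = \<zero>" using S_nzd[OF t(1)] t(2) by blast
  then have "a \<otimes> s' = a' \<otimes> s" using r_right_minus_eq c cc by simp
  then show "a \<in> carrier R \<and> a' \<in> carrier R \<and> s \<in> S \<and> s' \<in> S \<and> a \<otimes> s' = a' \<otimes> s"
    using c by blast
next
  assume h: "a \<in> carrier R \<and> a' \<in> carrier R \<and> s \<in> S \<and> s' \<in> S \<and> a \<otimes> s' = a' \<otimes> s"
  then have cc: "s \<in> carrier R" "s' \<in> carrier R" using S_car by auto
  have "(a \<otimes> s') \<ominus> (a' \<otimes> s) = \<zero>" using h cc r_right_minus_eq by simp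
  then have "\<one> \<otimes> ((a \<otimes> s') \<ominus> (a' \<otimes> s)) = \<zero>" by simp
  then show "((a,s),(a',s')) \<in> loc_rel R S" unfolding loc_rel_def using one_S h by blast
qed

lemma rel_D: "((a,s),(a',s')) \<in> loc_rel R S \<Longrightarrow> a \<in> carrier R \<and> a' \<in> carrier R \<and> s \<in> S \<and> s' \<in> S \<and> a \<otimes> s' = a' \<otimes> s"
  using rel_iff by blast

lemma rel_I: "a \<in> carrier R \<Longrightarrow> a' \<in> carrier R \<Longrightarrow> s \<in> S \<Longrightarrow> s' \<in> S \<Longrightarrow> a \<otimes> s' = a' \<otimes> s \<Longrightarrow> ((a,s),(a',s')) \<in> loc_rel R S"
  using rel_iff by blast

lemma loc_equiv: "equiv (carrier R \<times> S) (loc_rel R S)"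
proof (rule equivI)
  show "loc_rel R S \<subseteq> (carrier R \<times> S) \<times> (carrier R \<times> S)" unfolding loc_rel_def by blast
  show "refl_on (carrier R \<times> S) (loc_rel R S)"
  proof (rule refl_onI)
    fix x assume "x \<in> carrier R \<times> S" then obtain a s where "x = (a,s)" "a \<in> carrier R" "s \<in> S" by blast
    then show "(x,x) \<in> loc_rel R S" using rel_I by blast
  qed
  show "sym (loc_rel R S)" unfolding sym_def
  proof (clarify)
    fix a s a' s' assume "((a,s),(a',s')) \<in> loc_rel R S"
    then show "((a',s'),(a,s)) \<in> loc_rel R S" using rel_D rel_I by metis
  qed
  show "trans (loc_rel R S)" unfolding trans_def
  proof (clarify)
    fix a s a' s' a'' s''
    assume 1: "((a,s),(a',s')) \<in> loc_rel R S" and 2: "((a',s'),(a'',s'')) \<in> loc_rel R S"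
    have c: "a \<in> carrier R" "a' \<in> carrier R" "a'' \<in> carrier R" "s \<in> S" "s' \<in> S" "s'' \<in> S"
      and e1: "a \<otimes> s' = a' \<otimes> s" and e2: "a' \<otimes> s'' = a'' \<otimes> s'"
      using rel_D[OF 1] rel_D[OF 2] by auto
    have cc: "s \<in> carrier R" "s' \<in> carrier R" "s'' \<in> carrier R" using c S_car by auto
    have "s' \<otimes> (a \<otimes> s'') = (a \<otimes> s') \<otimes> s''" using c cc by algebra
    also have "\<dots> = (a' \<otimes> s) \<otimes> s''" using e1 by simp
    also have "\<dots> = (a' \<otimes> s'') \<otimes> s" using c cc by algebra
    also have "\<dots> = (a'' \<otimes> s') \<otimes> s" using e2 by simp
    also have "\<dots> = s' \<otimes> (a'' \<otimes> s)" using c cc by algebra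
    finally have e: "s' \<otimes> (a \<otimes> s'') = s' \<otimes> (a'' \<otimes> s)" .
    have "a \<otimes> s'' = a'' \<otimes> s" by (rule S_cancel[OF c(5) _ _ e]) (use c cc in simp_all)
    then show "((a,s),(a'',s'')) \<in> loc_rel R S" using rel_I c by blast
  qed
qed

abbreviation L where "L \<equiv> localization R S"
abbreviation fr where "fr \<equiv> frac R S"

lemma L_simps: "carrier L = (carrier R \<times> S) // loc_rel R S" "monoid.mult L = loc_mult R S"
  "ring.add L = loc_add R S" "monoid.one L = fr \<one> \<one>" "ring.zero L = fr \<zero> \<one>"
  by (simp_all add: localization_def)

lemma fr_in: "a \<in> carrier R \<Longrightarrow> s \<in> S \<Longrightarrow> fr a s \<in> carrier L"
  unfolding L_simps frac_def by (auto intro: quotientI)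

lemma fr_eq: "a \<in> carrier R \<Longrightarrow> s \<in> S \<Longrightarrow> a' \<in> carrier R \<Longrightarrow> s' \<in> S \<Longrightarrow>
   fr a s = fr a' s' \<longleftrightarrow> a \<otimes> s' = a' \<otimes> s"
  unfolding frac_def using eq_equiv_class_iff[OF loc_equiv] rel_iff by auto

lemma fr_eqI: "a \<in> carrier R \<Longrightarrow> s \<in> S \<Longrightarrow> a' \<in> carrier R \<Longrightarrow> s' \<in> S \<Longrightarrow>
   a \<otimes> s' = a' \<otimes> s \<Longrightarrow> fr a s = fr a' s'"
  using fr_eq by auto

lemma L_cases:
  assumes "U \<in> carrier L"
  obtains a s where "a \<in> carrier R" "s \<in> S" "U = fr a s"
  using assms unfolding L_simps frac_def by (auto elim!: quotientE)

lemma mem_fr: "(a', s') \<in> fr a s \<longleftrightarrow> ((a,s),(a',s')) \<in> loc_rel R S"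
  unfolding frac_def by auto

lemma mult_fr:
  assumes "a \<in> carrier R" "s \<in> S" "c \<in> carrier R" "t \<in> S"
  shows "loc_mult R S (fr a s) (fr c t) = fr (a \<otimes> c) (s \<otimes> t)"
proof -
  have "\<And>a1 s1 c1 t1. (a1, s1) \<in> fr a s \<Longrightarrow> (c1, t1) \<in> fr c t \<Longrightarrow>
     fr (a1 \<otimes> c1) (s1 \<otimes> t1) = fr (a \<otimes> c) (s \<otimes> t)"
  proof -
    fix a1 s1 c1 t1 assume "(a1, s1) \<in> fr a s" "(c1, t1) \<in> fr c t"
    then have c: "a1 \<in> carrier R" "s1 \<in> S" "c1 \<in> carrier R" "t1 \<in> S"
      and e: "a \<otimes> s1 = a1 \<otimes> s" "c \<otimes> t1 = c1 \<otimes> t" using mem_fr rel_D by blast+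
    have cc: "s \<in> carrier R" "t \<in> carrier R" "s1 \<in> carrier R" "t1 \<in> carrier R" using c assms S_car by auto
    have "(a1 \<otimes> c1) \<otimes> (s \<otimes> t) = (a1 \<otimes> s) \<otimes> (c1 \<otimes> t)" using c cc assms by algebra
    also have "\<dots> = (a \<otimes> s1) \<otimes> (c \<otimes> t1)" using e by simp
    also have "\<dots> = (a \<otimes> c) \<otimes> (s1 \<otimes> t1)" using c cc assms by algebra
    finally show "fr (a1 \<otimes> c1) (s1 \<otimes> t1) = fr (a \<otimes> c) (s \<otimes> t)"
      using fr_eqI c assms S_mult by auto
  qed
  moreover have "(a, s) \<in> fr a s" "(c,t) \<in> fr c t" using mem_fr rel_I assms by auto
  ultimately have "{fr (a1 \<otimes> c1) (s1 \<otimes> t1) | a1 s1 c1 t1. (a1, s1) \<in> fr a s \<and> (c1, t1) \<in> fr c t}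
     = {fr (a \<otimes> c) (s \<otimes> t)}" by blast
  then show ?thesis unfolding loc_mult_def by simp
qed

lemma add_fr:
  assumes "a \<in> carrier R" "s \<in> S" "c \<in> carrier R" "t \<in> S"
  shows "loc_add R S (fr a s) (fr c t) = fr ((a \<otimes> t) \<oplus> (c \<otimes> s)) (s \<otimes> t)"
proof -
  have "\<And>a1 s1 c1 t1. (a1, s1) \<in> fr a s \<Longrightarrow> (c1, t1) \<in> fr c t \<Longrightarrow>
     fr ((a1 \<otimes> t1) \<oplus> (c1 \<otimes> s1)) (s1 \<otimes> t1) = fr ((a \<otimes> t) \<oplus> (c \<otimes> s)) (s \<otimes> t)"
  proof -
    fix a1 s1 c1 t1 assume "(a1, s1) \<in> fr a s" "(c1, t1) \<in> fr c t"
    then have c: "a1 \<in> carrier R" "s1 \<in> S" "c1 \<in> carrier R" "t1 \<in> S"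
      and e: "a \<otimes> s1 = a1 \<otimes> s" "c \<otimes> t1 = c1 \<otimes> t" using mem_fr rel_D by blast+
    have cc: "s \<in> carrier R" "t \<in> carrier R" "s1 \<in> carrier R" "t1 \<in> carrier R" using c assms S_car by auto
    have "((a1 \<otimes> t1) \<oplus> (c1 \<otimes> s1)) \<otimes> (s \<otimes> t) = (a1 \<otimes> s) \<otimes> (t1 \<otimes> t) \<oplus> (c1 \<otimes> t) \<otimes> (s1 \<otimes> s)"
      using c cc assms by algebra
    also have "\<dots> = (a \<otimes> s1) \<otimes> (t1 \<otimes> t) \<oplus> (c \<otimes> t1) \<otimes> (s1 \<otimes> s)" using e by simp
    also have "\<dots> = ((a \<otimes> t) \<oplus> (c \<otimes> s)) \<otimes> (s1 \<otimes> t1)" using c cc assms by algebra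
    finally show "fr ((a1 \<otimes> t1) \<oplus> (c1 \<otimes> s1)) (s1 \<otimes> t1) = fr ((a \<otimes> t) \<oplus> (c \<otimes> s)) (s \<otimes> t)"
      using fr_eqI c cc assms S_mult by auto
  qed
  moreover have "(a, s) \<in> fr a s" "(c,t) \<in> fr c t" using mem_fr rel_I assms by auto
  ultimately have "{fr ((a1 \<otimes> t1) \<oplus> (c1 \<otimes> s1)) (s1 \<otimes> t1) | a1 s1 c1 t1. (a1, s1) \<in> fr a s \<and> (c1, t1) \<in> fr c t}
     = {fr ((a \<otimes> t) \<oplus> (c \<otimes> s)) (s \<otimes> t)}" by blast
  then show ?thesis unfolding loc_add_def by simp
qed



definition "LA = loc_add R S"
definition "LM = loc_mult R S"

lemma LA_closed: "x \<in> carrier L \<Longrightarrow> y \<in> carrier L \<Longrightarrow> LA x y \<in> carrier L"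
  unfolding LA_def by (elim L_cases) (simp add: add_fr fr_in S_mult S_car)

lemma LM_closed: "x \<in> carrier L \<Longrightarrow> y \<in> carrier L \<Longrightarrow> LM x y \<in> carrier L"
  unfolding LM_def by (elim L_cases) (simp add: mult_fr fr_in S_mult S_car)

lemma LA_assoc: "x \<in> carrier L \<Longrightarrow> y \<in> carrier L \<Longrightarrow> z \<in> carrier L \<Longrightarrow> LA (LA x y) z = LA x (LA y z)"
proof -
  assume "x \<in> carrier L" "y \<in> carrier L" "z \<in> carrier L"
  then obtain a s c t d u where c: "a \<in> carrier R" "s \<in> S" "c \<in> carrier R" "t \<in> S" "d \<in> carrier R" "u \<in> S"
    and xyz: "x = fr a s" "y = fr c t" "z = fr d u" by (metis L_cases)
  have cc: "s \<in> carrier R" "t \<in> carrier R" "u \<in> carrier R" using c S_car by auto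
  have m: "s \<otimes> t \<in> S" "t \<otimes> u \<in> S" "s \<otimes> t \<otimes> u \<in> S" "s \<otimes> (t \<otimes> u) \<in> S" using c S_mult by auto
  show ?thesis unfolding xyz LA_def
    apply (simp add: add_fr c cc m)
    apply (rule fr_eqI) apply (simp_all add: c cc m)
    using c cc by algebra
qed

lemma LA_comm: "x \<in> carrier L \<Longrightarrow> y \<in> carrier L \<Longrightarrow> LA x y = LA y x"
proof -
  assume "x \<in> carrier L" "y \<in> carrier L"
  then obtain a s c t where c: "a \<in> carrier R" "s \<in> S" "c \<in> carrier R" "t \<in> S"
    and xyz: "x = fr a s" "y = fr c t" by (metis L_cases)
  have cc: "s \<in> carrier R" "t \<in> carrier R" using c S_car by auto
  have m: "s \<otimes> t \<in> S" "t \<otimes> s \<in> S" using c S_mult by auto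
  show ?thesis unfolding xyz LA_def
    apply (simp add: add_fr c cc m)
    apply (rule fr_eqI) apply (simp_all add: c cc m)
    using c cc by algebra
qed

lemma LA_zero: "x \<in> carrier L \<Longrightarrow> LA (fr \<zero> \<one>) x = x"
proof -
  assume "x \<in> carrier L"
  then obtain a s where c: "a \<in> carrier R" "s \<in> S" and xyz: "x = fr a s" by (metis L_cases)
  have cc: "s \<in> carrier R" using c S_car by auto
  show ?thesis unfolding xyz LA_def using one_S
    by (simp add: add_fr c cc)
qed

lemma LA_inv: "x \<in> carrier L \<Longrightarrow> \<exists>y\<in>carrier L. LA y x = fr \<zero> \<one>"
proof -
  assume "x \<in> carrier L"
  then obtain a s where c: "a \<in> carrier R" "s \<in> S" and xyz: "x = fr a s" by (metis L_cases)
  have cc: "s \<in> carrier R" using c S_car by auto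
  have m: "s \<otimes> s \<in> S" using c S_mult by auto
  have "LA (fr (\<ominus> a) s) x = fr \<zero> \<one>" unfolding xyz LA_def using one_S
    apply (simp add: add_fr c cc m)
    apply (rule fr_eqI) apply (simp_all add: c cc m)
    using c cc by algebra
  then show ?thesis using fr_in c by blast
qed

lemma LM_assoc: "x \<in> carrier L \<Longrightarrow> y \<in> carrier L \<Longrightarrow> z \<in> carrier L \<Longrightarrow> LM (LM x y) z = LM x (LM y z)"
proof -
  assume "x \<in> carrier L" "y \<in> carrier L" "z \<in> carrier L"
  then obtain a s c t d u where c: "a \<in> carrier R" "s \<in> S" "c \<in> carrier R" "t \<in> S" "d \<in> carrier R" "u \<in> S"
    and xyz: "x = fr a s" "y = fr c t" "z = fr d u" by (metis L_cases)
  have cc: "s \<in> carrier R" "t \<in> carrier R" "u \<in> carrier R" using c S_car by auto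
  have m: "s \<otimes> t \<in> S" "t \<otimes> u \<in> S" using c S_mult by auto
  show ?thesis unfolding xyz LM_def
    by (simp add: mult_fr c cc m m_assoc)
qed

lemma LM_comm: "x \<in> carrier L \<Longrightarrow> y \<in> carrier L \<Longrightarrow> LM x y = LM y x"
proof -
  assume "x \<in> carrier L" "y \<in> carrier L"
  then obtain a s c t where c: "a \<in> carrier R" "s \<in> S" "c \<in> carrier R" "t \<in> S"
    and xyz: "x = fr a s" "y = fr c t" by (metis L_cases)
  have cc: "s \<in> carrier R" "t \<in> carrier R" using c S_car by auto
  show ?thesis unfolding xyz LM_def by (simp add: mult_fr c cc m_comm)
qed

lemma LM_one: "x \<in> carrier L \<Longrightarrow> LM (fr \<one> \<one>) x = x"
proof -
  assume "x \<in> carrier L"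
  then obtain a s where c: "a \<in> carrier R" "s \<in> S" and xyz: "x = fr a s" by (metis L_cases)
  have cc: "s \<in> carrier R" using c S_car by auto
  show ?thesis unfolding xyz LM_def using one_S by (simp add: mult_fr c cc)
qed

lemma L_distr: "x \<in> carrier L \<Longrightarrow> y \<in> carrier L \<Longrightarrow> z \<in> carrier L \<Longrightarrow> LM (LA x y) z = LA (LM x z) (LM y z)"
proof -
  assume "x \<in> carrier L" "y \<in> carrier L" "z \<in> carrier L"
  then obtain a s c t d u where c: "a \<in> carrier R" "s \<in> S" "c \<in> carrier R" "t \<in> S" "d \<in> carrier R" "u \<in> S"
    and xyz: "x = fr a s" "y = fr c t" "z = fr d u" by (metis L_cases)
  have cc: "s \<in> carrier R" "t \<in> carrier R" "u \<in> carrier R" using c S_car by auto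
  have m: "s \<otimes> t \<in> S" "s \<otimes> u \<in> S" "t \<otimes> u \<in> S" "s \<otimes> t \<otimes> u \<in> S" "s \<otimes> u \<otimes> (t \<otimes> u) \<in> S"
    using c S_mult by auto
  show ?thesis unfolding xyz LM_def LA_def
    apply (simp add: add_fr mult_fr c cc m)
    apply (rule fr_eqI) apply (simp_all add: c cc m)
    using c cc by algebra
qed

lemma L_cring: "cring L"
  apply (rule cringI[OF abelian_groupI comm_monoidI])
  apply (simp_all only: L_simps LA_def[symmetric] LM_def[symmetric])
  using LA_closed LA_assoc LA_comm LA_zero LA_inv LM_closed LM_assoc LM_comm LM_one L_distr
    fr_in[OF zero_closed one_S] fr_in[OF one_closed one_S]
  by (simp_all add: L_simps[symmetric])


lemma L_zero: "\<zero>\<^bsub>L\<^esub> = fr \<zero> \<one>" by (simp add: L_simps)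
lemma L_one: "\<one>\<^bsub>L\<^esub> = fr \<one> \<one>" by (simp add: L_simps)
lemma L_mult: "a \<in> carrier R \<Longrightarrow> s \<in> S \<Longrightarrow> c \<in> carrier R \<Longrightarrow> t \<in> S \<Longrightarrow>
  fr a s \<otimes>\<^bsub>L\<^esub> fr c t = fr (a \<otimes> c) (s \<otimes> t)"
  by (simp add: L_simps mult_fr)
lemma fr_zero_iff: "a \<in> carrier R \<Longrightarrow> s \<in> S \<Longrightarrow> fr a s = fr \<zero> \<one> \<longleftrightarrow> a = \<zero>"
  using fr_eq[of a s \<zero> \<one>] one_S S_car by simp
lemma S_pow: "s \<in> S \<Longrightarrow> s [^] (n::nat) \<in> S"
  by (induction n) (simp_all add: one_S S_mult S_car)
lemma fr_pow: "a \<in> carrier R \<Longrightarrow> s \<in> S \<Longrightarrow> fr a s [^]\<^bsub>L\<^esub> (n::nat) = fr (a [^] n) (s [^] n)"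
  by (induction n) (simp_all add: L_one L_mult S_pow S_car)

end


context cring begin

lemma ann_ideal: assumes x: "x \<in> carrier R" shows "ideal {a \<in> carrier R. a \<otimes> x = \<zero>} R"
proof (rule idealI)
  show "ring R" ..
  show "subgroup {a \<in> carrier R. a \<otimes> x = \<zero>} (add_monoid R)"
  proof (rule add.subgroupI)
    show "{a \<in> carrier R. a \<otimes> x = \<zero>} \<subseteq> carrier R" by auto
    show "{a \<in> carrier R. a \<otimes> x = \<zero>} \<noteq> {}" using x by (auto intro!: exI[of _ \<zero>])
    fix a assume "a \<in> {a \<in> carrier R. a \<otimes> x = \<zero>}"
    then show "\<ominus> a \<in> {a \<in> carrier R. a \<otimes> x = \<zero>}"
      using x by (simp add: l_minus)
  next
    fix a c assume "a \<in> {a \<in> carrier R. a \<otimes> x = \<zero>}" "c \<in> {a \<in> carrier R. a \<otimes> x = \<zero>}"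
    then show "a \<oplus> c \<in> {a \<in> carrier R. a \<otimes> x = \<zero>}"
      using x by (simp add: l_distr)
  qed
  fix a y assume a: "a \<in> {a \<in> carrier R. a \<otimes> x = \<zero>}" and y: "y \<in> carrier R"
  then show "y \<otimes> a \<in> {a \<in> carrier R. a \<otimes> x = \<zero>}" using x by (simp add: m_assoc)
  show "a \<otimes> y \<in> {a \<in> carrier R. a \<otimes> x = \<zero>}" using x a y
    by (simp add: m_assoc m_comm[of y x] m_assoc[symmetric])
qed

lemma prime_pow:
  assumes P: "primeideal P R" and x: "x \<in> carrier R"
  shows "x [^] (n::nat) \<in> P \<Longrightarrow> x \<in> P"
proof (induction n)
  case 0
  then have "P = carrier R" using ideal.one_imp_carrier[OF primeideal.axioms(1)[OF P]] by simp
  then show ?case using primeideal.I_notcarr[OF P] by simp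
next
  case (Suc n)
  then have "x [^] n \<otimes> x \<in> P" by simp
  then have "x [^] n \<in> P \<or> x \<in> P" using primeideal.I_prime[OF P] x by simp
  then show ?case using Suc by blast
qed

lemma nil_sub_prime: "primeideal P R \<Longrightarrow> nilrad R \<subseteq> P"
proof
  fix x assume P: "primeideal P R" and "x \<in> nilrad R"
  then obtain n where x: "x \<in> carrier R" "x [^] (n::nat) = \<zero>" unfolding nilrad_def by auto
  have "\<zero> \<in> P" using additive_subgroup.zero_closed[OF ideal.axioms(1)[OF primeideal.axioms(1)[OF P]]] by simp
  then show "x \<in> P" using prime_pow[OF P x(1), of n] x by simp
qed

lemma max_ann_prime:
  assumes z: "z \<in> carrier R" "z \<noteq> \<zero>"
    and mx: "\<And>z'. z' \<in> carrier R \<Longrightarrow> z' \<noteq> \<zero> \<Longrightarrow> {a \<in> carrier R. a \<otimes> z = \<zero>} \<subseteq> {a \<in> carrier R. a \<otimes> z' = \<zero>}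
       \<Longrightarrow> {a \<in> carrier R. a \<otimes> z' = \<zero>} = {a \<in> carrier R. a \<otimes> z = \<zero>}"
  shows "primeideal {a \<in> carrier R. a \<otimes> z = \<zero>} R"
proof (rule primeidealI)
  show "ideal {a \<in> carrier R. a \<otimes> z = \<zero>} R" using ann_ideal z by simp
  show "cring R" ..
  have "\<one> \<notin> {a \<in> carrier R. a \<otimes> z = \<zero>}" using z by simp
  then show "carrier R \<noteq> {a \<in> carrier R. a \<otimes> z = \<zero>}" by blast
  fix u v assume uv: "u \<in> carrier R" "v \<in> carrier R" "u \<otimes> v \<in> {a \<in> carrier R. a \<otimes> z = \<zero>}"
  show "u \<in> {a \<in> carrier R. a \<otimes> z = \<zero>} \<or> v \<in> {a \<in> carrier R. a \<otimes> z = \<zero>}"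
  proof (cases "u \<in> {a \<in> carrier R. a \<otimes> z = \<zero>}")
    case True then show ?thesis by blast
  next
    case False
    note nu = False
    then have uz: "u \<otimes> z \<noteq> \<zero>" using uv by simp
    have "{a \<in> carrier R. a \<otimes> z = \<zero>} \<subseteq> {a \<in> carrier R. a \<otimes> (u \<otimes> z) = \<zero>}"
    proof
      fix a assume "a \<in> {a \<in> carrier R. a \<otimes> z = \<zero>}"
      then have "a \<in> carrier R" "a \<otimes> z = \<zero>" by auto
      moreover have "a \<otimes> (u \<otimes> z) = u \<otimes> (a \<otimes> z)" using calculation uv z m_lcomm[of a u z] by simp
      ultimately show "a \<in> {a \<in> carrier R. a \<otimes> (u \<otimes> z) = \<zero>}" using uv by simp
    qed
    then have eq: "{a \<in> carrier R. a \<otimes> (u \<otimes> z) = \<zero>} = {a \<in> carrier R. a \<otimes> z = \<zero>}"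
      using mx[of "u \<otimes> z"] uz uv z by simp
    have "v \<otimes> (u \<otimes> z) = (u \<otimes> v) \<otimes> z" using uv z by algebra
    then have "v \<in> {a \<in> carrier R. a \<otimes> (u \<otimes> z) = \<zero>}" using uv by simp
    then show ?thesis using eq by simp
  qed
qed


lemma zero_divisor_nil:
  assumes no: "noetherian_ring R" and ass: "ass_primes R = {nilrad R}"
    and a: "a \<in> carrier R" and c: "c \<in> carrier R" "c \<noteq> \<zero>" and ac: "a \<otimes> c = \<zero>"
  shows "a \<in> nilrad R"
proof -
  interpret noetherian_ring R by fact
  define ann where "ann z = {a \<in> carrier R. a \<otimes> z = \<zero>}" for z
  define A where "A = {ann z | z. z \<in> carrier R \<and> z \<noteq> \<zero> \<and> ann c \<subseteq> ann z}"
  have "A \<noteq> {}" using c unfolding A_def by blast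
  moreover have "\<Union>C \<in> A" if "C \<noteq> {}" "subset.chain A C" for C
  proof -
    have CA: "C \<subseteq> A" using that(2) unfolding pred_on.chain_def by blast
    have "A \<subseteq> {I. ideal I R}" unfolding A_def ann_def using ann_ideal by blast
    then have "subset.chain {I. ideal I R} C" using that(2) unfolding pred_on.chain_def by blast
    then have "\<Union>C \<in> C" using ideal_chain_is_trivial that(1) by blast
    then show ?thesis using CA by blast
  qed
  ultimately obtain M where M: "M \<in> A" "\<And>Y. Y \<in> A \<Longrightarrow> M \<subseteq> Y \<Longrightarrow> Y = M"
    using subset_Zorn_nonempty[of A] by blast
  then obtain z where z: "z \<in> carrier R" "z \<noteq> \<zero>" "ann c \<subseteq> ann z" "M = ann z" unfolding A_def by blast
  have "primeideal (ann z) R" unfolding ann_def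
  proof (rule max_ann_prime[OF z(1,2)])
    fix z' assume z': "z' \<in> carrier R" "z' \<noteq> \<zero>" "{a \<in> carrier R. a \<otimes> z = \<zero>} \<subseteq> {a \<in> carrier R. a \<otimes> z' = \<zero>}"
    then have "ann z' \<in> A" using z unfolding A_def ann_def by blast
    then show "{a \<in> carrier R. a \<otimes> z' = \<zero>} = {a \<in> carrier R. a \<otimes> z = \<zero>}"
      using M(2) z(4) z'(3) unfolding ann_def by blast
  qed
  then have "ann z \<in> ass_primes R" unfolding ass_primes_def ann_def using z by blast
  then have "ann z = nilrad R" using ass by blast
  moreover have "a \<in> ann c" unfolding ann_def using a ac by simp
  ultimately show ?thesis using z(3) by blast
qed

end



lemma vplus_comm: "vplus x y = vplus y x"
  by (cases x; cases y) (simp_all add: add.commute)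
lemma vplus_assoc: "vplus (vplus x y) z = vplus x (vplus y z)"
  by (cases x; cases y; cases z) (simp_all add: add.assoc)
lemma vplus_None_iff: "vplus x y = None \<longleftrightarrow> x = None \<or> y = None"
  by (cases x; cases y) simp_all
lemma vplus_cancel: "vplus x (Some g) = vplus y (Some g) \<Longrightarrow> x = y"
  by (cases x; cases y) simp_all
lemma vplus_zero: "vplus x (Some 0) = x"
  by (cases x) simp_all
lemma vplus_solve: "vplus w (Some x) = Some y \<Longrightarrow> w = Some (y - x)"
  by (cases w) (simp_all add: algebra_simps)

locale blw =
  fixes R :: "('a,'b) ring_scheme" (structure)
    and m :: "'a set" and \<nu> :: "'a \<Rightarrow> 'g::linordered_ab_group_add option" and b :: 'a and as :: "'a list"
  assumes loc: "noeth_local_ring R m" and val: "valuation R \<nu>"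
    and bR: "b \<in> carrier R" and bs: "b \<notin> supp R \<nu>" and asR: "set as \<subseteq> carrier R"
    and ass: "ass_primes R = {nilrad R}"
begin

lemma cr: "cring R" using loc unfolding noeth_local_ring_def by simp
lemma noeth: "noetherian_ring R" using loc unfolding noeth_local_ring_def by simp

sublocale cring R by (rule cr)

lemma N_prime: "primeideal (nilrad R) R" using ass unfolding ass_primes_def by blast
lemma N_ann: "\<exists>x0\<in>carrier R. nilrad R = {a \<in> carrier R. a \<otimes> x0 = \<zero>}"
  using ass unfolding ass_primes_def by blast
lemma N_sub: "nilrad R \<subseteq> carrier R" unfolding nilrad_def by auto
lemma one_notN: "\<one> \<notin> nilrad R"
  using ideal.one_imp_carrier[OF primeideal.axioms(1)[OF N_prime]] primeideal.I_notcarr[OF N_prime] by auto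

lemma nzd: "a \<in> carrier R \<Longrightarrow> a \<notin> nilrad R \<Longrightarrow> c \<in> carrier R \<Longrightarrow> a \<otimes> c = \<zero> \<Longrightarrow> c = \<zero>"
  using zero_divisor_nil[OF noeth ass] by blast

lemma supp_eq: "supp R \<nu> = nilrad R"
proof -
  have mp: "minimal_prime (supp R \<nu>) R" using val unfolding valuation_def by blast
  then have "primeideal (supp R \<nu>) R" unfolding minimal_prime_def by blast
  then have "nilrad R \<subseteq> supp R \<nu>" by (rule nil_sub_prime)
  then show ?thesis using mp N_prime unfolding minimal_prime_def by blast
qed

lemma nu_mult: "x \<in> carrier R \<Longrightarrow> y \<in> carrier R \<Longrightarrow> \<nu> (x \<otimes> y) = vplus (\<nu> x) (\<nu> y)"
  using val unfolding valuation_def by blast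
lemma nu_one: "\<nu> \<one> = Some 0"
  using val unfolding valuation_def by blast
lemma nu_None: "x \<in> carrier R \<Longrightarrow> \<nu> x = None \<longleftrightarrow> x \<in> nilrad R"
  using supp_eq unfolding supp_def by blast

lemma b_notN: "b \<notin> nilrad R" using bs supp_eq by simp

lemma pow_notN: "x \<in> carrier R \<Longrightarrow> x \<notin> nilrad R \<Longrightarrow> x [^] (n::nat) \<notin> nilrad R"
  using prime_pow[OF N_prime] by blast

lemma powers_sub: "powers R b \<subseteq> carrier R" unfolding powers_def using bR by auto
lemma powers_notN: "s \<in> powers R b \<Longrightarrow> s \<notin> nilrad R"
  unfolding powers_def using pow_notN[OF bR b_notN] by auto
lemma b_P: "b \<in> powers R b"
  unfolding powers_def using bR by (auto intro!: exI[of _ "1::nat"])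
lemma one_P: "\<one> \<in> powers R b"
  unfolding powers_def by (auto intro!: exI[of _ "0::nat"])

lemma A_nzloc: "nzloc R (powers R b)"
  unfolding nzloc_def nzloc_axioms_def
proof (intro conjI allI impI cr)
  show "powers R b \<subseteq> carrier R" by (rule powers_sub)
  show "\<one> \<in> powers R b" by (rule one_P)
  fix s t assume "s \<in> powers R b" "t \<in> powers R b"
  then obtain i j where "s = b [^] (i::nat)" "t = b [^] (j::nat)" unfolding powers_def by blast
  then have "s \<otimes> t = b [^] (i + j)" using bR by (simp add: nat_pow_mult)
  then show "s \<otimes> t \<in> powers R b" unfolding powers_def by blast
next
  fix s a assume "s \<in> powers R b" "a \<in> carrier R" "s \<otimes> a = \<zero>"
  then show "a = \<zero>" using nzd powers_notN powers_sub by blast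
qed

sublocale A: nzloc R "powers R b" by (rule A_nzloc)

lemma nu_fin: "s \<in> powers R b \<Longrightarrow> \<exists>g. \<nu> s = Some g"
  using nu_None powers_notN powers_sub by blast

definition "Hs = (\<lambda>a. A.fr a \<one>) ` carrier R \<union> (\<lambda>a. A.fr a b) ` set as"
definition "Gs = generate_ring A.L Hs"
definition "Rp = A.L\<lparr>carrier := Gs\<rparr>"
definition "Ts = carrier Rp - center Rp (val_ext \<nu>)"

lemma AL_ring: "ring A.L" using A.L_cring cring.axioms(1) by blast

lemma Hs_sub: "Hs \<subseteq> carrier A.L"
  unfolding Hs_def using A.fr_in one_P b_P asR by auto

lemma Gs_sub: "Gs \<subseteq> carrier A.L"
  unfolding Gs_def by (rule ring.generate_ring_incl[OF AL_ring Hs_sub])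

lemma Gs_subring: "subring Gs A.L"
  unfolding Gs_def by (rule ring.generate_ring_is_subring[OF AL_ring Hs_sub])

lemma Rp_cring: "cring Rp"
  unfolding Rp_def using ring.subcring_iff[OF AL_ring Gs_sub] cring.subcringI'[OF A.L_cring Gs_subring] by simp

lemma Rp_simps: "carrier Rp = Gs" "monoid.mult Rp = monoid.mult A.L" "monoid.one Rp = monoid.one A.L"
  "ring.zero Rp = ring.zero A.L" "ring.add Rp = ring.add A.L"
  by (simp_all add: Rp_def)

lemma Rp_pow: "x [^]\<^bsub>Rp\<^esub> (n::nat) = x [^]\<^bsub>A.L\<^esub> n"
  by (induction n) (simp_all add: Rp_simps)

lemma Gs_cases:
  assumes "U \<in> Gs"
  obtains a s where "a \<in> carrier R" "s \<in> powers R b" "U = A.fr a s"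
  using assms Gs_sub A.L_cases by blast

lemma Gs_one: "A.fr \<one> \<one> \<in> Gs"
  unfolding Gs_def using generate_ring.one[of A.L Hs] A.L_one by simp

lemma Gs_mult: "U \<in> Gs \<Longrightarrow> V \<in> Gs \<Longrightarrow> U \<otimes>\<^bsub>A.L\<^esub> V \<in> Gs"
  unfolding Gs_def by (rule generate_ring.eng_mult)

lemma Gs_incl: "a \<in> carrier R \<Longrightarrow> A.fr a \<one> \<in> Gs"
  unfolding Gs_def Hs_def by (rule generate_ring.incl) blast

lemma VE:
  assumes a: "a \<in> carrier R" and s: "s \<in> powers R b"
  shows "vplus (val_ext \<nu> (A.fr a s)) (\<nu> s) = \<nu> a"
proof -
  obtain g where g: "\<nu> s = Some g" using nu_fin[OF s] by blast
  define v0 where "v0 = (case \<nu> a of None \<Rightarrow> None | Some h \<Rightarrow> Some (h - g))"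
  have v0: "vplus v0 (\<nu> s) = \<nu> a" unfolding v0_def g by (cases "\<nu> a") simp_all
  have "(a, s) \<in> A.fr a s" using A.mem_fr A.rel_I a s by blast
  then have ex: "\<exists>v. \<exists>(a', s') \<in> A.fr a s. \<nu> a' = vplus v (\<nu> s')"
    using v0 by (intro exI[of _ v0] bexI[of _ "(a,s)"]) auto
  obtain a' s' where p: "(a', s') \<in> A.fr a s" and e: "\<nu> a' = vplus (val_ext \<nu> (A.fr a s)) (\<nu> s')"
    using someI_ex[OF ex] unfolding val_ext_def by blast
  have r: "a' \<in> carrier R" "s' \<in> powers R b" "a \<otimes> s' = a' \<otimes> s"
    using A.rel_D p A.mem_fr by blast+
  obtain g' where g': "\<nu> s' = Some g'" using nu_fin[OF r(2)] by blast
  have sc: "s \<in> carrier R" "s' \<in> carrier R" using s r powers_sub by auto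
  have "vplus (\<nu> a) (\<nu> s') = vplus (\<nu> a') (\<nu> s)"
    using nu_mult[OF a sc(2)] nu_mult[OF r(1) sc(1)] r(3) by simp
  also have "\<dots> = vplus (vplus (val_ext \<nu> (A.fr a s)) (\<nu> s)) (\<nu> s')"
    unfolding e by (simp add: vplus_assoc vplus_comm[of "\<nu> s"])
  finally show ?thesis using vplus_cancel g' by metis
qed

lemma ve_fr: "a \<in> carrier R \<Longrightarrow> s \<in> powers R b \<Longrightarrow> \<nu> s = Some gs \<Longrightarrow> val_ext \<nu> (A.fr a s) = Some g
   \<Longrightarrow> \<nu> a = Some (g + gs)"
  using VE by fastforce

lemma Ts_fin: "U \<in> Ts \<Longrightarrow> \<exists>g. val_ext \<nu> U = Some g \<and> g \<le> 0"
  unfolding Ts_def center_def vpos_def by (cases "val_ext \<nu> U") auto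

lemma Ts_sub: "Ts \<subseteq> Gs" unfolding Ts_def Rp_simps by blast

lemma Ts_I: "U \<in> Gs \<Longrightarrow> val_ext \<nu> U = Some g \<Longrightarrow> g \<le> 0 \<Longrightarrow> U \<in> Ts"
  unfolding Ts_def center_def vpos_def Rp_simps by auto

lemma Ts_numer: "U \<in> Ts \<Longrightarrow> a \<in> carrier R \<Longrightarrow> s \<in> powers R b \<Longrightarrow> U = A.fr a s \<Longrightarrow> a \<notin> nilrad R"
proof -
  assume U: "U \<in> Ts" and a: "a \<in> carrier R" and s: "s \<in> powers R b" and Ue: "U = A.fr a s"
  obtain g where g: "val_ext \<nu> U = Some g" using Ts_fin[OF U] by blast
  obtain gs where "\<nu> s = Some gs" using nu_fin[OF s] by blast
  then have "\<nu> a = Some (g + gs)" using ve_fr a s g Ue by blast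
  then show ?thesis using nu_None[OF a] by simp
qed

lemma B_nzloc: "nzloc Rp Ts"
  unfolding nzloc_def nzloc_axioms_def
proof (intro conjI allI impI Rp_cring)
  show "Ts \<subseteq> carrier Rp" unfolding Ts_def by blast
  have "val_ext \<nu> (A.fr \<one> \<one>) = Some 0"
    using VE[OF one_closed one_P] nu_one by (simp add: vplus_zero)
  then show "\<one>\<^bsub>Rp\<^esub> \<in> Ts" using Ts_I Gs_one by (simp add: Rp_simps A.L_one)
next
  fix U V assume U: "U \<in> Ts" and V: "V \<in> Ts"
  obtain a s where as: "a \<in> carrier R" "s \<in> powers R b" "U = A.fr a s" using U Ts_sub Gs_cases by blast
  obtain c t where ct: "c \<in> carrier R" "t \<in> powers R b" "V = A.fr c t" using V Ts_sub Gs_cases by blast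
  obtain g where g: "val_ext \<nu> U = Some g" "g \<le> 0" using Ts_fin[OF U] by blast
  obtain h where h: "val_ext \<nu> V = Some h" "h \<le> 0" using Ts_fin[OF V] by blast
  obtain gs where gs: "\<nu> s = Some gs" using nu_fin[OF as(2)] by blast
  obtain gt where gt: "\<nu> t = Some gt" using nu_fin[OF ct(2)] by blast
  have na: "\<nu> a = Some (g + gs)" using ve_fr as g gs by blast
  have nc: "\<nu> c = Some (h + gt)" using ve_fr ct h gt by blast
  have sc: "s \<in> carrier R" "t \<in> carrier R" using as ct powers_sub by auto
  have UV: "U \<otimes>\<^bsub>Rp\<^esub> V = A.fr (a \<otimes> c) (s \<otimes> t)"
    using as ct by (simp add: Rp_simps A.L_mult)
  have st: "s \<otimes> t \<in> powers R b" using as ct A.S_mult by blast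
  have "vplus (val_ext \<nu> (A.fr (a \<otimes> c) (s \<otimes> t))) (Some (gs + gt)) = Some ((g + gs) + (h + gt))"
    using VE[OF m_closed[OF as(1) ct(1)] st] nu_mult[OF sc] nu_mult[OF as(1) ct(1)] na nc gs gt by simp
  then have "val_ext \<nu> (A.fr (a \<otimes> c) (s \<otimes> t)) = Some (g + h)"
    using vplus_solve by (fastforce simp: algebra_simps)
  moreover have "U \<otimes>\<^bsub>Rp\<^esub> V \<in> Gs" using Gs_mult U V Ts_sub by (auto simp: Rp_simps)
  moreover have "g + h \<le> 0" using g(2) h(2) add_nonpos_nonpos by blast
  ultimately show "U \<otimes>\<^bsub>Rp\<^esub> V \<in> Ts" using Ts_I UV by simp
next
  fix U V assume U: "U \<in> Ts" and V: "V \<in> carrier Rp" and e: "U \<otimes>\<^bsub>Rp\<^esub> V = \<zero>\<^bsub>Rp\<^esub>"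
  obtain a s where as: "a \<in> carrier R" "s \<in> powers R b" "U = A.fr a s" using U Ts_sub Gs_cases by blast
  obtain c t where ct: "c \<in> carrier R" "t \<in> powers R b" "V = A.fr c t" using V Gs_cases Rp_simps by blast
  have "A.fr (a \<otimes> c) (s \<otimes> t) = A.fr \<zero> \<one>"
    using e as ct by (simp add: Rp_simps A.L_mult A.L_zero)
  then have "a \<otimes> c = \<zero>" using A.fr_zero_iff as ct A.S_mult by simp
  then have "c = \<zero>" using nzd Ts_numer[OF U as] as ct by blast
  then show "V = \<zero>\<^bsub>Rp\<^esub>" using ct A.fr_eqI[of \<zero> t \<zero> \<one>] one_P powers_sub
    by (auto simp: Rp_simps A.L_zero)
qed

end



context blw begin

sublocale B: nzloc Rp Ts by (rule B_nzloc)

lemma Gs_Rp: "U \<in> Gs \<Longrightarrow> U \<in> carrier Rp" by (simp add: Rp_simps)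

lemma BL_cases:
  assumes "Z \<in> carrier B.L"
  obtains U W a s where "U \<in> Gs" "W \<in> Ts" "a \<in> carrier R" "s \<in> powers R b" "U = A.fr a s" "Z = B.fr U W"
proof -
  obtain U W where UW: "U \<in> carrier Rp" "W \<in> Ts" "Z = B.fr U W" using B.L_cases[OF assms] by blast
  then have "U \<in> Gs" by (simp add: Rp_simps)
  then obtain a s where "a \<in> carrier R" "s \<in> powers R b" "U = A.fr a s" using Gs_cases by blast
  then show ?thesis using that UW \<open>U \<in> Gs\<close> by blast
qed

lemma zero_char:
  assumes "U \<in> Gs" "W \<in> Ts" "a \<in> carrier R" "s \<in> powers R b" "U = A.fr a s"
  shows "B.fr U W = \<zero>\<^bsub>B.L\<^esub> \<longleftrightarrow> a = \<zero>"
proof -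
  have "B.fr U W = \<zero>\<^bsub>B.L\<^esub> \<longleftrightarrow> U = \<zero>\<^bsub>Rp\<^esub>"
    using B.fr_zero_iff[OF Gs_Rp[OF assms(1)] assms(2)] B.L_zero by simp
  also have "\<dots> \<longleftrightarrow> a = \<zero>" using A.fr_zero_iff[OF assms(3,4)] assms(5) by (simp add: Rp_simps A.L_zero)
  finally show ?thesis .
qed

lemma nil_char:
  assumes U: "U \<in> Gs" and W: "W \<in> Ts" and a: "a \<in> carrier R" and s: "s \<in> powers R b" and Ue: "U = A.fr a s"
  shows "B.fr U W \<in> nilrad B.L \<longleftrightarrow> a \<in> nilrad R"
proof -
  have Z: "B.fr U W \<in> carrier B.L" using B.fr_in Gs_Rp[OF U] W by blast
  have "B.fr U W [^]\<^bsub>B.L\<^esub> n = \<zero>\<^bsub>B.L\<^esub> \<longleftrightarrow> a [^] n = \<zero>" for n :: nat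
  proof -
    have Un: "U [^]\<^bsub>Rp\<^esub> n \<in> carrier Rp" using B.nat_pow_closed Gs_Rp[OF U] by blast
    have Wn: "W [^]\<^bsub>Rp\<^esub> n \<in> Ts" using B.S_pow W by blast
    have "B.fr U W [^]\<^bsub>B.L\<^esub> n = B.fr (U [^]\<^bsub>Rp\<^esub> n) (W [^]\<^bsub>Rp\<^esub> n)"
      using B.fr_pow Gs_Rp[OF U] W by blast
    then have "B.fr U W [^]\<^bsub>B.L\<^esub> n = \<zero>\<^bsub>B.L\<^esub> \<longleftrightarrow> U [^]\<^bsub>Rp\<^esub> n = \<zero>\<^bsub>Rp\<^esub>"
      using B.fr_zero_iff[OF Un Wn] B.L_zero by simp
    also have "U [^]\<^bsub>Rp\<^esub> n = A.fr (a [^] n) (s [^] n)"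
      using Rp_pow A.fr_pow[OF a s] Ue by simp
    also have "A.fr (a [^] n) (s [^] n) = \<zero>\<^bsub>Rp\<^esub> \<longleftrightarrow> a [^] n = \<zero>"
      using A.fr_zero_iff[OF nat_pow_closed[OF a] A.S_pow[OF s]] by (simp add: Rp_simps A.L_zero)
    finally show ?thesis .
  qed
  then show ?thesis using Z a unfolding nilrad_def by auto
qed

lemma mult_char:
  assumes "U \<in> Gs" "W \<in> Ts" "a \<in> carrier R" "s \<in> powers R b" "U = A.fr a s"
    and "U' \<in> Gs" "W' \<in> Ts" "c \<in> carrier R" "t \<in> powers R b" "U' = A.fr c t"
  shows "B.fr U W \<otimes>\<^bsub>B.L\<^esub> B.fr U' W' = B.fr (A.fr (a \<otimes> c) (s \<otimes> t)) (W \<otimes>\<^bsub>Rp\<^esub> W')"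
    and "A.fr (a \<otimes> c) (s \<otimes> t) \<in> Gs" and "W \<otimes>\<^bsub>Rp\<^esub> W' \<in> Ts"
proof -
  have e: "U \<otimes>\<^bsub>Rp\<^esub> U' = A.fr (a \<otimes> c) (s \<otimes> t)"
    using assms by (simp add: Rp_simps A.L_mult)
  show "B.fr U W \<otimes>\<^bsub>B.L\<^esub> B.fr U' W' = B.fr (A.fr (a \<otimes> c) (s \<otimes> t)) (W \<otimes>\<^bsub>Rp\<^esub> W')"
    using B.L_mult[OF Gs_Rp[OF assms(1)] assms(2) Gs_Rp[OF assms(6)] assms(7)] e by simp
  show "A.fr (a \<otimes> c) (s \<otimes> t) \<in> Gs" using Gs_mult[OF assms(1,6)] e by (simp add: Rp_simps)
  show "W \<otimes>\<^bsub>Rp\<^esub> W' \<in> Ts" using B.S_mult assms by blast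
qed

lemma main: "ass_primes B.L = {nilrad B.L}"
proof -
  interpret BL: cring B.L by (rule B.L_cring)
  obtain x0 where x0: "x0 \<in> carrier R" "nilrad R = {a \<in> carrier R. a \<otimes> x0 = \<zero>}" using N_ann by blast
  define X0 where "X0 = B.fr (A.fr x0 \<one>) \<one>\<^bsub>Rp\<^esub>"
  have U0: "A.fr x0 \<one> \<in> Gs" using Gs_incl x0 by blast
  have X0c: "X0 \<in> carrier B.L" unfolding X0_def using B.fr_in Gs_Rp[OF U0] B.one_S by blast
  have nilsub: "nilrad B.L \<subseteq> carrier B.L" unfolding nilrad_def by blast
  have iff: "Z \<in> nilrad B.L \<longleftrightarrow> Z \<otimes>\<^bsub>B.L\<^esub> X0 = \<zero>\<^bsub>B.L\<^esub>" if Z: "Z \<in> carrier B.L" for Z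
  proof -
    obtain U W a s where u: "U \<in> Gs" "W \<in> Ts" "a \<in> carrier R" "s \<in> powers R b" "U = A.fr a s" "Z = B.fr U W"
      using BL_cases[OF Z] by blast
    note mc = mult_char[OF u(1-5) U0 B.one_S x0(1) one_P refl]
    have "Z \<otimes>\<^bsub>B.L\<^esub> X0 = \<zero>\<^bsub>B.L\<^esub> \<longleftrightarrow> a \<otimes> x0 = \<zero>"
      unfolding X0_def u(6) mc(1) using zero_char[OF mc(2) mc(3) m_closed[OF u(3) x0(1)] A.S_mult[OF u(4) one_P] refl] .
    also have "\<dots> \<longleftrightarrow> a \<in> nilrad R" using x0 u(3) by blast
    also have "\<dots> \<longleftrightarrow> Z \<in> nilrad B.L" using nil_char[OF u(1-5)] u(6) by simp
    finally show ?thesis by simp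
  qed
  have ann_eq: "nilrad B.L = {Z \<in> carrier B.L. Z \<otimes>\<^bsub>B.L\<^esub> X0 = \<zero>\<^bsub>B.L\<^esub>}"
    using iff nilsub by blast
  have prime: "primeideal (nilrad B.L) B.L"
  proof (rule primeidealI)
    show "ideal (nilrad B.L) B.L" unfolding ann_eq by (rule BL.ann_ideal[OF X0c])
    show "cring B.L" by (rule B.L_cring)
    have o: "\<one>\<^bsub>B.L\<^esub> = B.fr (A.fr \<one> \<one>) (A.fr \<one> \<one>)" using B.L_one by (simp add: Rp_simps A.L_one)
    have "\<one>\<^bsub>B.L\<^esub> \<notin> nilrad B.L"
      unfolding o using nil_char[OF Gs_one _ one_closed one_P refl] B.one_S one_notN
      by (simp add: Rp_simps A.L_one)
    then show "carrier B.L \<noteq> nilrad B.L" using BL.one_closed by blast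
  next
    fix Z1 Z2 assume Z1: "Z1 \<in> carrier B.L" and Z2: "Z2 \<in> carrier B.L" and Z12: "Z1 \<otimes>\<^bsub>B.L\<^esub> Z2 \<in> nilrad B.L"
    obtain U W a s where u: "U \<in> Gs" "W \<in> Ts" "a \<in> carrier R" "s \<in> powers R b" "U = A.fr a s" "Z1 = B.fr U W"
      using BL_cases[OF Z1] by blast
    obtain U' W' c t where u': "U' \<in> Gs" "W' \<in> Ts" "c \<in> carrier R" "t \<in> powers R b" "U' = A.fr c t" "Z2 = B.fr U' W'"
      using BL_cases[OF Z2] by blast
    note mc = mult_char[OF u(1-5) u'(1-5)]
    have "a \<otimes> c \<in> nilrad R"
      using Z12 nil_char[OF mc(2) mc(3) m_closed[OF u(3) u'(3)] A.S_mult[OF u(4) u'(4)] refl]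
      unfolding u(6) u'(6) mc(1) by simp
    then have "a \<in> nilrad R \<or> c \<in> nilrad R" using primeideal.I_prime[OF N_prime u(3) u'(3)] by blast
    then show "Z1 \<in> nilrad B.L \<or> Z2 \<in> nilrad B.L"
      using nil_char[OF u(1-5)] nil_char[OF u'(1-5)] u(6) u'(6) by blast
  qed
  have "nilrad B.L \<in> ass_primes B.L" unfolding ass_primes_def using prime ann_eq X0c by blast
  moreover have "P = nilrad B.L" if P: "P \<in> ass_primes B.L" for P
  proof -
    obtain Y where PY: "primeideal P B.L" "Y \<in> carrier B.L" "P = {Z \<in> carrier B.L. Z \<otimes>\<^bsub>B.L\<^esub> Y = \<zero>\<^bsub>B.L\<^esub>}"
      using P unfolding ass_primes_def by blast
    have "nilrad B.L \<subseteq> P" using BL.nil_sub_prime[OF PY(1)] .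
    moreover have "P \<subseteq> nilrad B.L"
    proof
      fix Z assume "Z \<in> P"
      then have Z: "Z \<in> carrier B.L" "Z \<otimes>\<^bsub>B.L\<^esub> Y = \<zero>\<^bsub>B.L\<^esub>" using PY by auto
      have Y0: "Y \<noteq> \<zero>\<^bsub>B.L\<^esub>"
      proof
        assume "Y = \<zero>\<^bsub>B.L\<^esub>"
        then have "P = carrier B.L" using PY(3) BL.r_null by auto
        then show False using primeideal.I_notcarr[OF PY(1)] by simp
      qed
      obtain U W a s where u: "U \<in> Gs" "W \<in> Ts" "a \<in> carrier R" "s \<in> powers R b" "U = A.fr a s" "Z = B.fr U W"
        using BL_cases[OF Z(1)] by blast
      obtain U' W' c t where u': "U' \<in> Gs" "W' \<in> Ts" "c \<in> carrier R" "t \<in> powers R b" "U' = A.fr c t" "Y = B.fr U' W'"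
        using BL_cases[OF PY(2)] by blast
      have c0: "c \<noteq> \<zero>" using zero_char[OF u'(1-5)] Y0 u'(6) by simp
      note mc = mult_char[OF u(1-5) u'(1-5)]
      have "a \<otimes> c = \<zero>"
        using Z(2) zero_char[OF mc(2) mc(3) m_closed[OF u(3) u'(3)] A.S_mult[OF u(4) u'(4)] refl]
        unfolding u(6) u'(6) mc(1) by simp
      then have "a \<in> nilrad R" using zero_divisor_nil[OF noeth ass u(3) u'(3) c0] by blast
      then show "Z \<in> nilrad B.L" using nil_char[OF u(1-5)] u(6) by simp
    qed
    ultimately show ?thesis by blast
  qed
  ultimately show ?thesis by blast
qed

end

theorem mainTheorem9:
  fixes R :: "('a, 'b) ring_scheme" and m :: "'a set"
    and \<nu> :: "'a \<Rightarrow> 'g::linordered_ab_group_add option"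
    and b :: 'a and as :: "'a list"
  assumes "noeth_local_ring R m"
    and "valuation R \<nu>"
    and "centered_on R m \<nu>"
    and "b \<in> carrier R" and "b \<notin> supp R \<nu>"
    and "set as \<subseteq> carrier R"
    and "\<forall>a \<in> set as. vle (\<nu> b) (\<nu> a)"
    and "ass_primes R = {nilrad R}"
  shows "ass_primes (local_blowup R \<nu> b as) = {nilrad (local_blowup R \<nu> b as)}"
proof -
  interpret blw R m \<nu> b as
    using assms(1,2,4,5,6,8) by unfold_locales
  have "local_blowup R \<nu> b as = B.L"
    unfolding local_blowup_def blowup_subring_def Let_def Ts_def Rp_def Gs_def Hs_def by simp
  then show ?thesis using main by simp
qed


end
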